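(* Let $a\in[0,\infty)$ and let $\theta:[0,1]\to[0,\infty]$ and $\vartheta:[0,\infty]\to[0,1]$ be continuous and decreasing functions such that (1) $\theta(x)=\infty$ if and only if $x=0$; (2) $\theta(x)=\frac{a}{2}$ if and only if $x=1$; (3) $\vartheta(x)=1$ if and only if $x\in[0,a]$; (4) $\vartheta(x)=0$ if and only if $x=\infty$. Then the function $O_{\theta,\vartheta}:[0,1]^2\to[0,1]$ defined by $O_{\theta,\vartheta}(x,y)=\vartheta(\theta(x)+\theta(y))$ is an overlap function.
   Context: "Decreasing" means non-increasing and "increasing" means non-decreasing. Arithmetic in $[0,\infty]$ uses $c+\infty=\infty$; continuity on $[0,\infty]$ refers to the usual topology of the extended half-line. An overlap function is a map $O:[0,1]^2\to[0,1]$ that is (O1) commutative, (O2) $O(x,y)=0$ iff $xy=0$, (O3) $O(x,y)=1$ iff $xy=1$, (O4) increasing in each variable, (O5) continuous. *)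

theory Defs
  imports "HOL-Analysis.Analysis" "HOL-Library.Extended_Nonnegative_Real"
begin

definition overlap_function :: "(real \<Rightarrow> real \<Rightarrow> real) \<Rightarrow> bool" where
  "overlap_function Ov \<longleftrightarrow>
     (\<forall>x\<in>{0..1}. \<forall>y\<in>{0..1}. Ov x y \<in> {0..1}) \<and>
     (\<forall>x\<in>{0..1}. \<forall>y\<in>{0..1}. Ov x y = Ov y x) \<and>
     (\<forall>x\<in>{0..1}. \<forall>y\<in>{0..1}. Ov x y = 0 \<longleftrightarrow> x * y = 0) \<and>
     (\<forall>x\<in>{0..1}. \<forall>y\<in>{0..1}. Ov x y = 1 \<longleftrightarrow> x * y = 1) \<and>
     (\<forall>x\<in>{0..1}. \<forall>y\<in>{0..1}. \<forall>z\<in>{0..1}. x \<le> y \<longrightarrow> Ov x z \<le> Ov y z \<and> Ov z x \<le> Ov z y) \<and>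
     continuous_on ({0..1} \<times> {0..1}) (\<lambda>(x, y). Ov x y)"

end

theory Submission
  imports Defs
begin

theorem theorem3p2:
  fixes a :: real and th :: "real \<Rightarrow> ennreal" and vth :: "ennreal \<Rightarrow> real"
  assumes a_nonneg: "0 \<le> a"
    and th_cont: "continuous_on {0..1} th"
    and th_dec: "antimono_on {0..1} th"
    and vth_range: "\<forall>t. vth t \<in> {0..1}"
    and vth_cont: "continuous_on UNIV vth"
    and vth_dec: "antimono vth"
    and h1: "\<forall>x\<in>{0..1}. th x = \<infinity> \<longleftrightarrow> x = 0"
    and h2: "\<forall>x\<in>{0..1}. th x = ennreal (a / 2) \<longleftrightarrow> x = 1"
    and h3: "\<forall>t. vth t = 1 \<longleftrightarrow> t \<le> ennreal a"
    and h4: "\<forall>t. vth t = 0 \<longleftrightarrow> t = \<infinity>"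
  shows "overlap_function (\<lambda>x y. vth (th x + th y))"
proof -
  have ge: "th x \<ge> ennreal (a/2)" if "x \<in> {0..1}" for x
  proof -
    have "th 1 \<le> th x" using th_dec that by (auto simp: monotone_on_def)
    moreover have "th 1 = ennreal (a/2)" using h2 by auto
    ultimately show ?thesis by simp
  qed
  have one: "th x + th y \<le> ennreal a \<longleftrightarrow> x = 1 \<and> y = 1" if "x \<in> {0..1}" "y \<in> {0..1}" for x y
  proof
    assume A: "th x + th y \<le> ennreal a"
    have gx: "th x \<ge> ennreal (a/2)" and gy: "th y \<ge> ennreal (a/2)" using ge that by auto
    have fx: "th x \<noteq> \<infinity>" and fy: "th y \<noteq> \<infinity>" using A by (auto simp: top_unique)
    obtain p where p: "th x = ennreal p" "p \<ge> 0" using fx by (cases "th x" rule: ennreal_cases) auto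
    obtain q where q: "th y = ennreal q" "q \<ge> 0" using fy by (cases "th y" rule: ennreal_cases) auto
    have "p \<ge> a/2" "q \<ge> a/2" using gx gy p q a_nonneg by (auto simp: ennreal_le_iff)
    moreover have "p + q \<le> a" using A p q a_nonneg by (simp add: ennreal_plus[symmetric] del: ennreal_plus)
    ultimately have "p = a/2" "q = a/2" by auto
    then show "x = 1 \<and> y = 1" using h2 that p q by auto
  next
    assume "x = 1 \<and> y = 1"
    moreover have "th 1 = ennreal (a/2)" using h2 by auto
    moreover have "ennreal (a/2) + ennreal (a/2) = ennreal a" using a_nonneg
      by (simp add: ennreal_plus[symmetric] del: ennreal_plus)
    ultimately show "th x + th y \<le> ennreal a" by simp
  qed
  show ?thesis unfolding overlap_function_def
  proof (intro conjI ballI impI)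
    fix x y assume "x \<in> {0..1::real}" "y \<in> {0..1::real}"
    show "vth (th x + th y) \<in> {0..1}" using vth_range by auto
    show "vth (th x + th y) = vth (th y + th x)" by (simp add: add.commute)
    show "vth (th x + th y) = 0 \<longleftrightarrow> x * y = 0" using h4 h1 \<open>x \<in> _\<close> \<open>y \<in> _\<close> by auto
    show "vth (th x + th y) = 1 \<longleftrightarrow> x * y = 1" using h3 one[OF \<open>x \<in> _\<close> \<open>y \<in> _\<close>] \<open>x \<in> _\<close> \<open>y \<in> _\<close>
      by (auto simp: mult_eq_1)
  next
    fix x y z assume xyz: "x \<in> {0..1::real}" "y \<in> {0..1::real}" "z \<in> {0..1::real}" "x \<le> y"
    have "th y \<le> th x" using th_dec xyz by (auto simp: monotone_on_def)
    then have "th y + th z \<le> th x + th z" "th z + th y \<le> th z + th x" by (auto intro: add_mono)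
    then show "vth (th x + th z) \<le> vth (th y + th z)" "vth (th z + th x) \<le> vth (th z + th y)"
      using vth_dec by (auto simp: antimono_def)
  next
    have "continuous_on ({0..1} \<times> {0..1}) (\<lambda>p. vth (th (fst p) + th (snd p)))"
    proof (rule continuous_on_compose2[OF vth_cont _ subset_UNIV])
      have c1: "continuous_on ({0..1} \<times> {0..1::real}) (\<lambda>p. th (fst p))"
        by (rule continuous_on_compose2[OF th_cont continuous_on_fst]) auto
      have c2: "continuous_on ({0..1} \<times> {0..1::real}) (\<lambda>p. th (snd p))"
        by (rule continuous_on_compose2[OF th_cont continuous_on_snd]) auto
      show "continuous_on ({0..1} \<times> {0..1::real}) (\<lambda>p. th (fst p) + th (snd p))"
        by (rule continuous_on_add[OF c1 c2])
    qed
    then show "continuous_on ({0..1} \<times> {0..1}) (\<lambda>(x, y). vth (th x + th y))"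
      by (simp add: case_prod_beta)
  qed
qed

end
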